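(* Let $p\ge1$ and $n\ge p$ be integers, and let $\Lambda\in\mathbb R$. The real vector space of even functions $z\in C^{2n}[-1,1]$ satisfying - $L^{2n}(\Lambda)z=0$ on $[-1,1]$, and - $z^{(j)}(\pm1)=0$ for $j=0,\dots,n-1$, has dimension at most $1$. Equivalently, two linearly independent even eigenfunctions of order $n$ have different eigenvalues.
   Context: Fix an integer $p\ge1$. For an integer $k\ge p$ and real $\Lambda$, the differential operator on $[-1,1]$ is $$L^{2k}(\Lambda)=(-1)^k\frac{d^{2k}}{dx^{2k}}-\Lambda(-1)^{k-p}\frac{d^{2k-2p}}{dx^{2k-2p}}.$$ An eigenfunction of order $k$ with eigenvalue $\Lambda$ is a nonzero real $z\in C^{2k}[-1,1]$ such that: - $L^{2k}(\Lambda)z=0$ on $[-1,1]$, and - $z^{(j)}(\pm1)=0$ for $j<k$. *)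

theory Defs
  imports "HOL-Analysis.Analysis"
begin

text \<open>z is of class C^k on S, with D j its j-th derivative (D 0 = z on S).
  Derivatives are taken within S, so at the endpoints of [-1,1] they are one-sided.\<close>
definition Ck_derivs :: "nat \<Rightarrow> real set \<Rightarrow> (real \<Rightarrow> real) \<Rightarrow> (nat \<Rightarrow> real \<Rightarrow> real) \<Rightarrow> bool" where
  "Ck_derivs k S z D \<longleftrightarrow>
     (\<forall>x\<in>S. D 0 x = z x) \<and>
     (\<forall>j<k. \<forall>x\<in>S. (D j has_real_derivative D (Suc j) x) (at x within S)) \<and>
     (\<forall>j\<le>k. continuous_on S (D j))"

definition L_op :: "nat \<Rightarrow> nat \<Rightarrow> real \<Rightarrow> (nat \<Rightarrow> real \<Rightarrow> real) \<Rightarrow> real \<Rightarrow> real" where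
  "L_op p k \<Lambda> D x = (-1) ^ k * D (2*k) x - \<Lambda> * (-1) ^ (k - p) * D (2*k - 2*p) x"

definition even_sol :: "nat \<Rightarrow> nat \<Rightarrow> real \<Rightarrow> (real \<Rightarrow> real) \<Rightarrow> bool" where
  "even_sol p n \<Lambda> z \<longleftrightarrow>
     (\<exists>D. Ck_derivs (2*n) {-1..1} z D \<and>
          (\<forall>x\<in>{-1..1}. L_op p n \<Lambda> D x = 0) \<and>
          (\<forall>j<n. D j 1 = 0 \<and> D j (-1) = 0)) \<and>
     (\<forall>x\<in>{-1..1}. z (-x) = z x)"

end

theory Submission imports Defs begin

lemma ibp1:
  fixes f f' g g' :: "real \<Rightarrow> real"
  assumes df: "\<forall>x\<in>{-1..1}. (f has_real_derivative f' x) (at x within {-1..1})"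
    and dg: "\<forall>x\<in>{-1..1}. (g has_real_derivative g' x) (at x within {-1..1})"
    and c: "continuous_on {-1..1} f" "continuous_on {-1..1} f'"
       "continuous_on {-1..1} g" "continuous_on {-1..1} g'"
  shows "integral {-1..1} (\<lambda>x. f' x * g x) = f 1 * g 1 - f (-1) * g (-1) - integral {-1..1} (\<lambda>x. f x * g' x)"
proof -
  have "((\<lambda>x. f' x * g x + f x * g' x) has_integral (f 1 * g 1 - f (-1) * g (-1))) {-1..1}"
  proof -
    have h: "\<forall>x\<in>{-1..1}. ((\<lambda>x. f x * g x) has_vector_derivative f' x * g x + f x * g' x) (at x within {-1..1})"
      using df dg by (auto simp: has_real_derivative_iff_has_vector_derivative[symmetric] intro!: derivative_eq_intros)
    moreover have le: "-1 \<le> (1::real)" by simp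
    ultimately show ?thesis by (intro fundamental_theorem_of_calculus[OF le]) blast
  qed
  hence "integral {-1..1} (\<lambda>x. f' x * g x + f x * g' x) = f 1 * g 1 - f (-1) * g (-1)"
    by (rule integral_unique)
  moreover have "integral {-1..1} (\<lambda>x. f' x * g x + f x * g' x) = integral {-1..1} (\<lambda>x. f' x * g x) + integral {-1..1} (\<lambda>x. f x * g' x)"
    by (rule integral_add; rule integrable_continuous_interval; intro continuous_intros c)
  ultimately show ?thesis by linarith
qed

lemma ibp:
  fixes F G :: "nat \<Rightarrow> real \<Rightarrow> real"
  assumes "\<forall>i<m. \<forall>x\<in>{-1..1}. (F i has_real_derivative F (Suc i) x) (at x within {-1..1})"
    and "\<forall>i<m. \<forall>x\<in>{-1..1}. (G i has_real_derivative G (Suc i) x) (at x within {-1..1})"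
    and "\<forall>i\<le>m. continuous_on {-1..1} (F i)" "\<forall>i\<le>m. continuous_on {-1..1} (G i)"
    and "\<forall>i<m. F (m-1-i) 1 * G i 1 = 0 \<and> F (m-1-i) (-1) * G i (-1) = 0"
  shows "integral {-1..1} (\<lambda>x. F m x * G 0 x) = (-1)^m * integral {-1..1} (\<lambda>x. F 0 x * G m x)"
  using assms
proof (induction m arbitrary: G)
  case 0
  then show ?case by simp
next
  case (Suc m)
  have "integral {-1..1} (\<lambda>x. F (Suc m) x * G 0 x) = F m 1 * G 0 1 - F m (-1) * G 0 (-1) - integral {-1..1} (\<lambda>x. F m x * G 1 x)"
    by (rule ibp1) (use Suc.prems in auto)
  moreover have "F m 1 * G 0 1 = 0" "F m (-1) * G 0 (-1) = 0" using Suc.prems(5) by auto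
  moreover have "integral {-1..1} (\<lambda>x. F m x * G 1 x) = (-1)^m * integral {-1..1} (\<lambda>x. F 0 x * G (Suc m) x)"
    using Suc.IH[of "\<lambda>i. G (Suc i)"] Suc.prems
    by (auto simp: Suc_diff_Suc)
  ultimately show ?case by simp
qed

lemma zero_sol:
  fixes p n :: nat and \<Lambda> :: real and z :: "real \<Rightarrow> real" and D :: "nat \<Rightarrow> real \<Rightarrow> real"
  assumes p: "p \<ge> 1" and np: "n \<ge> p"
    and Ck: "Ck_derivs (2*n) {-1..1} z D"
    and L: "\<forall>x\<in>{-1..1}. L_op p n \<Lambda> D x = 0"
    and bc: "\<forall>j<n. D j 1 = 0 \<and> D j (-1) = 0"
    and bn: "D n 1 = 0"
  shows "\<forall>x\<in>{-1..1}. z x = 0"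
proof -
  define S :: "real set" where "S = {-1..1}"
  have z: "\<forall>x\<in>S. D 0 x = z x" and der: "\<forall>j<2*n. \<forall>x\<in>S. (D j has_real_derivative D (Suc j) x) (at x within S)"
    and cont: "\<forall>j\<le>2*n. continuous_on S (D j)"
    using Ck unfolding Ck_derivs_def S_def by auto
  have n1: "n \<ge> 1" using p np by simp
  have intg: "\<And>f :: real \<Rightarrow> real. continuous_on S f \<Longrightarrow> f integrable_on S"
    unfolding S_def by (erule integrable_continuous_interval)
  have energy: "integral S (\<lambda>x. D (2*k) x * D 0 x) = (-1)^k * integral S (\<lambda>x. D k x * D k x)"
    if "k \<le> n" for k
  proof -
    have "integral S (\<lambda>x. D (k+k) x * D 0 x) = (-1)^k * integral S (\<lambda>x. D (k+0) x * D k x)"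
      unfolding S_def
      by (rule ibp[where F="\<lambda>i. D (k+i)" and G=D and m=k]) (use that der cont bc in \<open>auto simp: S_def\<close>)
    then show ?thesis by (simp add: mult_2)
  qed
  have poho: "integral S (\<lambda>x. D (2*k) x * ((x+1) * D 1 x)) = (-1)^k * ((real k - 1/2) * integral S (\<lambda>x. D k x * D k x))"
    if "k \<le> n" "D k 1 = 0" for k
  proof -
    define G where "G = (\<lambda>i x. (x+1) * D (Suc i) x + real i * D i x)"
    have "integral S (\<lambda>x. D (k+k) x * G 0 x) = (-1)^k * integral S (\<lambda>x. D (k+0) x * G k x)"
      unfolding S_def
    proof (rule ibp[where F="\<lambda>i. D (k+i)" and G=G and m=k])
      show "\<forall>i<k. \<forall>x\<in>{-1..1}. (D (k + i) has_real_derivative D (k + Suc i) x) (at x within {-1..1})"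
        using that der by (auto simp: S_def)
      show "\<forall>i\<le>k. continuous_on {-1..1} (D (k + i))" using that cont by (auto simp: S_def)
      show "\<forall>i<k. \<forall>x\<in>{-1..1}. (G i has_real_derivative G (Suc i) x) (at x within {-1..1})"
      proof (intro allI impI ballI)
        fix i x assume i: "i < k" and x: "x \<in> {-1..(1::real)}"
        have d1: "(D (Suc i) has_real_derivative D (Suc (Suc i)) x) (at x within {-1..1})"
          using der i that n1 x by (auto simp: S_def)
        have d0: "(D i has_real_derivative D (Suc i) x) (at x within {-1..1})"
          using der i that n1 x by (auto simp: S_def)
        have "(G i has_real_derivative (1 * D (Suc i) x + (x+1) * D (Suc (Suc i)) x) + real i * D (Suc i) x) (at x within {-1..1})"
          unfolding G_def by (intro derivative_eq_intros d1 d0) (auto intro: d1 d0)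
        then show "(G i has_real_derivative G (Suc i) x) (at x within {-1..1})"
          by (simp add: G_def algebra_simps)
      qed
      show "\<forall>i\<le>k. continuous_on {-1..1} (G i)"
      proof (intro allI impI)
        fix i assume "i \<le> k"
        then have "continuous_on S (D (Suc i))" "continuous_on S (D i)" using cont that n1 by auto
        then show "continuous_on {-1..1} (G i)" unfolding G_def S_def by (intro continuous_intros)
      qed
      show "\<forall>i<k. D (k + (k - 1 - i)) 1 * G i 1 = 0 \<and> D (k + (k - 1 - i)) (- 1) * G i (- 1) = 0"
      proof (intro allI impI)
        fix i assume i: "i < k"
        have "D (Suc i) 1 = 0"
        proof (cases "Suc i = k")
          case True then show ?thesis using that by simp
        next
          case False then show ?thesis using i that bc by auto
        qed
        moreover have "D i 1 = 0" "D i (-1) = 0" using bc i that by auto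
        ultimately show "D (k + (k - 1 - i)) 1 * G i 1 = 0 \<and> D (k + (k - 1 - i)) (- 1) * G i (- 1) = 0"
          by (simp add: G_def)
      qed
    qed
    hence e1: "integral S (\<lambda>x. D (2*k) x * ((x+1) * D 1 x)) = (-1)^k * integral S (\<lambda>x. D k x * G k x)"
      by (simp add: G_def mult_2)
    have ck: "continuous_on S (D k)" "continuous_on S (D (Suc k))" using cont that n1 by auto
    have "integral S (\<lambda>x. D k x * G k x) = integral S (\<lambda>x. (x+1) * D k x * D (Suc k) x) + real k * integral S (\<lambda>x. D k x * D k x)"
    proof -
      have "integral S (\<lambda>x. D k x * G k x) = integral S (\<lambda>x. (x+1) * D k x * D (Suc k) x + real k * (D k x * D k x))"
        by (rule integral_cong) (simp add: G_def algebra_simps)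
      also have "\<dots> = integral S (\<lambda>x. (x+1) * D k x * D (Suc k) x) + integral S (\<lambda>x. real k * (D k x * D k x))"
        by (rule integral_add; rule intg; intro continuous_intros ck)
      finally show ?thesis by simp
    qed
    moreover have "integral S (\<lambda>x. (x+1) * D k x * D (Suc k) x) = - (1/2) * integral S (\<lambda>x. D k x * D k x)"
    proof -
      have dk: "\<forall>x\<in>{-1..1}. (D k has_real_derivative D (Suc k) x) (at x within {-1..1})"
        using der that n1 by (auto simp: S_def)
      have "integral {-1..1} (\<lambda>x. (1 * D k x + (x+1) * D (Suc k) x) * D k x)
          = (1+1) * D k 1 * D k 1 - (-1+1) * D k (-1) * D k (-1) - integral {-1..1} (\<lambda>x. (x+1) * D k x * D (Suc k) x)"
      proof (rule ibp1[where f="\<lambda>x. (x+1) * D k x" and g="D k" and f'="\<lambda>x. 1 * D k x + (x+1) * D (Suc k) x" and g'="D (Suc k)"])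
        show "\<forall>x\<in>{-1..1}. ((\<lambda>x. (x + 1) * D k x) has_real_derivative 1 * D k x + (x + 1) * D (Suc k) x) (at x within {-1..1})"
          using dk by (auto intro!: derivative_eq_intros)
      qed (use ck dk in \<open>auto simp: S_def intro!: continuous_intros\<close>)
      also have "\<dots> = - integral S (\<lambda>x. (x+1) * D k x * D (Suc k) x)" using that by (simp add: S_def)
      finally have A: "integral S (\<lambda>x. D k x * D k x + (x+1) * D k x * D (Suc k) x) = - integral S (\<lambda>x. (x+1) * D k x * D (Suc k) x)"
        by (simp add: S_def algebra_simps)
      have "integral S (\<lambda>x. D k x * D k x + (x+1) * D k x * D (Suc k) x) = integral S (\<lambda>x. D k x * D k x) + integral S (\<lambda>x. (x+1) * D k x * D (Suc k) x)"
        by (rule integral_add; rule intg; intro continuous_intros ck)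
      with A show ?thesis by linarith
    qed
    ultimately show ?thesis using e1 by (simp add: algebra_simps)
  qed
  have lin: "integral S (\<lambda>x. (a * f x - b * g x) * h x) = a * integral S (\<lambda>x. f x * h x) - b * integral S (\<lambda>x. g x * h x)"
    if "continuous_on S f" "continuous_on S g" "continuous_on S h" for a b :: real and f g h
  proof -
    have "integral S (\<lambda>x. (a * f x - b * g x) * h x) = integral S (\<lambda>x. a * (f x * h x) - b * (g x * h x))"
      by (rule integral_cong) (simp add: algebra_simps)
    also have "\<dots> = integral S (\<lambda>x. a * (f x * h x)) - integral S (\<lambda>x. b * (g x * h x))"
      by (rule integral_diff; rule intg; intro continuous_intros that)
    finally show ?thesis by simp
  qed
  have sq: "(-1::real)^k * (-1)^k = 1" for k :: nat
    by (simp flip: power_add)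
  have Lx: "(-1)^n * D (2*n) x - \<Lambda> * (-1)^(n-p) * D (2*(n-p)) x = 0" if "x \<in> S" for x
    using L that unfolding L_op_def S_def by (simp add: diff_mult_distrib2)
  have c2n: "continuous_on S (D (2*n))" "continuous_on S (D (2*(n-p)))" "continuous_on S (D 0)"
     "continuous_on S (D 1)" using cont n1 by auto
  define A where "A = integral S (\<lambda>x. D n x * D n x)"
  define B where "B = integral S (\<lambda>x. D (n-p) x * D (n-p) x)"
  have "0 = integral S (\<lambda>x. ((-1)^n * D (2*n) x - (\<Lambda> * (-1)^(n-p)) * D (2*(n-p)) x) * D 0 x)"
    by (subst integral_cong[where g="\<lambda>x. 0"]) (use Lx in auto)
  also have "\<dots> = (-1)^n * integral S (\<lambda>x. D (2*n) x * D 0 x) - (\<Lambda> * (-1)^(n-p)) * integral S (\<lambda>x. D (2*(n-p)) x * D 0 x)"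
    by (rule lin) (use c2n in auto)
  also have "\<dots> = ((-1)^n * (-1)^n) * A - \<Lambda> * ((-1)^(n-p) * (-1)^(n-p)) * B"
    using energy[of n] energy[of "n-p"] unfolding A_def B_def by simp
  finally have EA: "A = \<Lambda> * B" by (simp add: sq)
  have bnp: "D (n-p) 1 = 0" using bc p n1 by auto
  have "0 = integral S (\<lambda>x. ((-1)^n * D (2*n) x - (\<Lambda> * (-1)^(n-p)) * D (2*(n-p)) x) * ((x+1) * D 1 x))"
    by (subst integral_cong[where g="\<lambda>x. 0"]) (use Lx in auto)
  also have "\<dots> = (-1)^n * integral S (\<lambda>x. D (2*n) x * ((x+1) * D 1 x)) - (\<Lambda> * (-1)^(n-p)) * integral S (\<lambda>x. D (2*(n-p)) x * ((x+1) * D 1 x))"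
    by (rule lin) (use c2n in \<open>auto intro!: continuous_intros\<close>)
  also have "\<dots> = ((-1)^n * (-1)^n) * ((real n - 1/2) * A) - \<Lambda> * ((-1)^(n-p) * (-1)^(n-p)) * ((real (n-p) - 1/2) * B)"
    using poho[of n] poho[of "n-p"] bn bnp unfolding A_def B_def by simp
  finally have "(real n - 1/2) * A = (real (n-p) - 1/2) * (\<Lambda> * B)" by (simp add: sq algebra_simps)
  with EA have "real p * A = 0" using np by (simp add: of_nat_diff algebra_simps)
  with p have A0: "A = 0" by simp
  have Dn0: "D n x = 0" if "x \<in> S" for x
  proof -
    have "(\<lambda>x. D n x * D n x) x = 0"
    proof (rule has_integral_0_cbox_imp_0[of "-1" 1 "\<lambda>x. D n x * D n x"])
      show "continuous_on (cbox (-1) 1) (\<lambda>x. D n x * D n x)"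
        using cont n1 by (auto simp: S_def intro!: continuous_intros)
      show "((\<lambda>x. D n x * D n x) has_integral 0) (cbox (-1) 1)"
      proof -
        have "continuous_on S (\<lambda>x. D n x * D n x)" using cont n1 by (auto intro!: continuous_intros)
        then have "(\<lambda>x. D n x * D n x) integrable_on S" by (rule intg)
        then have "((\<lambda>x. D n x * D n x) has_integral A) S" unfolding A_def by (rule integrable_integral)
        then show ?thesis using A0 by (simp add: S_def)
      qed
    qed (use that in \<open>auto simp: S_def\<close>)
    then show ?thesis by simp
  qed
  have "\<forall>x\<in>S. D (n-j) x = 0" if "j \<le> n" for j
    using that
  proof (induction j)
    case 0 then show ?case using Dn0 by simp
  next
    case (Suc j)
    have "\<exists>c. \<forall>x\<in>S. D (n - Suc j) x = c"
    proof (rule has_field_derivative_zero_constant)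
      show "convex S" by (simp add: S_def)
      fix x assume x: "x \<in> S"
      have "(D (n - Suc j) has_real_derivative D (Suc (n - Suc j)) x) (at x within S)"
        using der x Suc.prems by auto
      moreover have "Suc (n - Suc j) = n - j" using Suc.prems by simp
      ultimately show "(D (n - Suc j) has_field_derivative 0) (at x within S)"
        using Suc.IH Suc.prems x by auto
    qed
    then obtain c where c: "\<forall>x\<in>S. D (n - Suc j) x = c" by blast
    have "D (n - Suc j) 1 = 0" using bc Suc.prems by auto
    moreover have "(1::real) \<in> S" by (simp add: S_def)
    ultimately show ?case using c by auto
  qed
  from this[of n] z show ?thesis by (auto simp: S_def)
qed

theorem mainTheorem7:
  fixes p n :: nat and \<Lambda> :: real and z1 z2 :: "real \<Rightarrow> real"
  assumes "p \<ge> 1" and "n \<ge> p"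
    and "even_sol p n \<Lambda> z1" and "even_sol p n \<Lambda> z2"
  shows "\<exists>a b :: real. (a \<noteq> 0 \<or> b \<noteq> 0) \<and> (\<forall>x\<in>{-1..1}. a * z1 x + b * z2 x = 0)"
proof -
  obtain D1 where D1: "Ck_derivs (2*n) {-1..1} z1 D1" "\<forall>x\<in>{-1..1}. L_op p n \<Lambda> D1 x = 0"
      "\<forall>j<n. D1 j 1 = 0 \<and> D1 j (-1) = 0"
    using assms(3) unfolding even_sol_def by blast
  obtain D2 where D2: "Ck_derivs (2*n) {-1..1} z2 D2" "\<forall>x\<in>{-1..1}. L_op p n \<Lambda> D2 x = 0"
      "\<forall>j<n. D2 j 1 = 0 \<and> D2 j (-1) = 0"
    using assms(4) unfolding even_sol_def by blast
  show ?thesis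
  proof (cases "D1 n 1 = 0")
    case True
    have "\<forall>x\<in>{-1..1}. z1 x = 0" by (rule zero_sol[OF assms(1,2) D1 True])
    then show ?thesis by (intro exI[of _ 1] exI[of _ 0]) auto
  next
    case False
    define a where "a = D2 n 1"
    define b where "b = - D1 n 1"
    define D where "D = (\<lambda>j x. a * D1 j x + b * D2 j x)"
    have Ck: "Ck_derivs (2*n) {-1..1} (\<lambda>x. a * z1 x + b * z2 x) D"
      using D1(1) D2(1) unfolding Ck_derivs_def D_def
      by (auto intro!: derivative_eq_intros continuous_intros)
    have L: "\<forall>x\<in>{-1..1}. L_op p n \<Lambda> D x = 0"
    proof
      fix x :: real assume "x \<in> {-1..1}"
      then have "L_op p n \<Lambda> D1 x = 0" "L_op p n \<Lambda> D2 x = 0" using D1(2) D2(2) by auto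
      then show "L_op p n \<Lambda> D x = 0" unfolding L_op_def D_def
        by (simp add: algebra_simps)
    qed
    have bc: "\<forall>j<n. D j 1 = 0 \<and> D j (-1) = 0" using D1(3) D2(3) by (simp add: D_def)
    have bn: "D n 1 = 0" by (simp add: D_def a_def b_def)
    have "\<forall>x\<in>{-1..1}. a * z1 x + b * z2 x = 0" by (rule zero_sol[OF assms(1,2) Ck L bc bn])
    moreover have "b \<noteq> 0" using False by (simp add: b_def)
    ultimately show ?thesis by blast
  qed
qed

end
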